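(* Let $X$ be a connected locally compact Polish space and $B\subseteq X$ dense. If $\succeq$ and $\succeq'$ are continuous preferences on $X$ with $\succeq\cap(B\times B)=\succeq'\cap(B\times B)$, then $\succeq=\succeq'$.
   Context: A preference is a complete and transitive binary relation on $X$; it is continuous if it is a closed subset of $X\times X$. *)

theory Defs
  imports "HOL-Analysis.Analysis"
begin

definition preference :: "('a \<times> 'a) set \<Rightarrow> bool" where
  "preference R \<longleftrightarrow> (\<forall>x y. (x, y) \<in> R \<or> (y, x) \<in> R) \<and> trans R"

definition continuous_preference :: "('a::topological_space \<times> 'a) set \<Rightarrow> bool" where
  "continuous_preference R \<longleftrightarrow> preference R \<and> closed R"

end

theory Submission
  imports Defs
begin

lemma open_slice1:
  fixes R :: "('a::topological_space \<times> 'a) set"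
  assumes "closed R" shows "open {v. (u,v) \<notin> R}"
proof -
  have "closed (Pair u -` R)"
    by (rule closed_vimage[OF assms]) (intro continuous_intros)
  then show ?thesis by (simp add: open_closed Compl_eq vimage_def)
qed

lemma open_slice2:
  fixes R :: "('a::topological_space \<times> 'a) set"
  assumes "closed R" shows "open {v. (v,u) \<notin> R}"
proof -
  have "closed ((\<lambda>v. (v,u)) -` R)"
    by (rule closed_vimage[OF assms]) (intro continuous_intros)
  then show ?thesis by (simp add: open_closed Compl_eq vimage_def)
qed

lemma dense_meet:
  assumes "closure B = UNIV" "open S" "w \<in> S"
  shows "\<exists>b\<in>B. b \<in> S"
proof -
  have "w \<in> closure B" using assms(1) by simp
  then have "B \<inter> S \<noteq> {}" using assms(2,3) unfolding closure_iff_nhds_not_empty by blast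
  then show ?thesis by blast
qed

lemma half:
  fixes B :: "'a::topological_space set"
    and R R' :: "('a \<times> 'a) set"
  assumes conn: "connected (UNIV :: 'a set)"
    and dB: "closure B = UNIV"
    and cR: "continuous_preference R"
    and cR': "continuous_preference R'"
    and agree: "R \<inter> (B \<times> B) = R' \<inter> (B \<times> B)"
  shows "R \<subseteq> R'"
proof
  have tot: "\<And>a b. (a,b) \<in> R \<or> (b,a) \<in> R" and tr: "trans R" and clR: "closed R"
    using cR unfolding continuous_preference_def preference_def by auto
  have tot': "\<And>a b. (a,b) \<in> R' \<or> (b,a) \<in> R'" and tr': "trans R'" and clR': "closed R'"
    using cR' unfolding continuous_preference_def preference_def by auto
  have ag: "\<And>a b. a \<in> B \<Longrightarrow> b \<in> B \<Longrightarrow> (a,b) \<in> R \<longleftrightarrow> (a,b) \<in> R'"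
    using agree by blast
  have between: "\<exists>b\<in>B. (x,b) \<notin> R' \<and> (b,y) \<notin> R'" if xy: "(x,y) \<notin> R'" for x y
  proof -
    let ?A = "{z. (x,z) \<notin> R'}" and ?C = "{z. (z,y) \<notin> R'}"
    have oA: "open ?A" by (rule open_slice1[OF clR'])
    have oC: "open ?C" by (rule open_slice2[OF clR'])
    have cov: "UNIV \<subseteq> ?A \<union> ?C"
    proof
      fix z assume "z \<in> (UNIV :: 'a set)"
      show "z \<in> ?A \<union> ?C"
      proof (rule ccontr)
        assume "z \<notin> ?A \<union> ?C"
        then have "(x,z) \<in> R'" "(z,y) \<in> R'" by auto
        then have "(x,y) \<in> R'" using tr' by (meson transD)
        then show False using xy by simp
      qed
    qed
    have "?A \<inter> ?C \<noteq> {}"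
    proof
      assume "?A \<inter> ?C = {}"
      then have "?A \<inter> UNIV = {} \<or> ?C \<inter> UNIV = {}"
        using connectedD[OF conn oA oC] cov by auto
      moreover have "y \<in> ?A" "x \<in> ?C" using xy by auto
      ultimately show False by blast
    qed
    then obtain w where "w \<in> ?A \<inter> ?C" by blast
    moreover have "open (?A \<inter> ?C)" using oA oC by blast
    ultimately obtain b where "b \<in> B" "b \<in> ?A \<inter> ?C" using dense_meet[OF dB] by blast
    then show ?thesis by blast
  qed
  have C1: "(u,w) \<in> R" if "u \<in> B" "(w,u) \<notin> R'" for u w
  proof (rule ccontr)
    assume "(u,w) \<notin> R"
    then have "w \<in> {v. (u,v) \<notin> R} \<inter> {v. (v,u) \<notin> R'}" using that by blast
    moreover have "open ({v. (u,v) \<notin> R} \<inter> {v. (v,u) \<notin> R'})"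
      using open_slice1[OF clR] open_slice2[OF clR'] by blast
    ultimately obtain a where a: "a \<in> B" "(u,a) \<notin> R" "(a,u) \<notin> R'"
      using dense_meet[OF dB] by blast
    then have "(a,u) \<notin> R" using ag that(1) by blast
    then show False using tot a by blast
  qed
  have C2: "(w,u) \<in> R" if "u \<in> B" "(u,w) \<notin> R'" for u w
  proof (rule ccontr)
    assume "(w,u) \<notin> R"
    then have "w \<in> {v. (v,u) \<notin> R} \<inter> {v. (u,v) \<notin> R'}" using that by blast
    moreover have "open ({v. (v,u) \<notin> R} \<inter> {v. (u,v) \<notin> R'})"
      using open_slice2[OF clR] open_slice1[OF clR'] by blast
    ultimately obtain a where a: "a \<in> B" "(a,u) \<notin> R" "(u,a) \<notin> R'"
      using dense_meet[OF dB] by blast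
    then have "(u,a) \<notin> R" using ag that(1) by blast
    then show False using tot a by blast
  qed
  fix p assume pR: "p \<in> R"
  obtain x y where p: "p = (x,y)" by (cases p)
  show "p \<in> R'"
  proof (rule ccontr)
    assume "p \<notin> R'"
    then have "(x,y) \<notin> R'" using p by simp
    then obtain b2 where b2: "b2 \<in> B" "(x,b2) \<notin> R'" "(b2,y) \<notin> R'" using between by blast
    then obtain b1 where b1: "b1 \<in> B" "(x,b1) \<notin> R'" "(b1,b2) \<notin> R'" using between by blast
    have "(b1,b2) \<notin> R" using ag b1 b2 by blast
    moreover have "(b1,x) \<in> R" using C1 b1 by blast
    moreover have "(y,b2) \<in> R" using C2 b2 by blast
    moreover have "(x,y) \<in> R" using pR p by simp
    ultimately have "(b1,b2) \<in> R" using tr by (meson transD)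
    then show False using \<open>(b1,b2) \<notin> R\<close> by simp
  qed
qed

theorem theorem13:
  fixes B :: "'a::polish_space set"
    and R R' :: "('a \<times> 'a) set"
  assumes "connected (UNIV :: 'a set)"
    and "locally_compact_space (euclidean :: 'a topology)"
    and "closure B = UNIV"
    and "continuous_preference R"
    and "continuous_preference R'"
    and "R \<inter> (B \<times> B) = R' \<inter> (B \<times> B)"
  shows "R = R'"
  using half[OF assms(1,3,4,5,6)] half[OF assms(1,3,5,4) assms(6)[symmetric]] by blast

end
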